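(* In the algorithm DMA, the infeasible merged schedule produced in Step 3 has length at most $(\mu+1/\beta)\Delta$.
   Context: Model. $m$ servers, each a sender and a receiver. A coflow is an $m\times m$ nonnegative integer matrix $(d_{sr})$ of unit packets from sender $s$ to receiver $r$. Each job $j\in\mathcal{N}$ has $\mu_j$ coflows $\mathcal{D}^{(cj)}$ and a DAG $G_j$ (edge $c_1\to c_2$: $c_2$ may not start before $c_1$ finishes). Each slot, each sender sends at most one and each receiver receives at most one packet. $\mu=\max_j\mu_j$. Effective size of a coflow: $D=\max\{\max_s\sum_rd_{sr},\max_r\sum_sd_{sr}\}$; $\Delta$ is the effective size of $\sum_j\sum_c\mathcal{D}^{(cj)}$. BNA: polynomial-time procedure scheduling all packets of a coflow of effective size $D$ feasibly in $D$ consecutive slots. Algorithm DMA (constant $\beta>1/e$): Step 1: for each job, schedule its coflows one after another in a topological order of $G_j$, each with BNA, starting at time $0$ (isolated schedule). Step 2: delay each job's isolated schedule by an independent uniformly random integer in $[0,\Delta/\beta]$. Step 3: merge the delayed schedules slot by slot (capacity constraints may be violated). Step 4: replace each slot $t$ by $\alpha_t$ slots in which its packets are scheduled feasibly by BNA, where $\alpha_t\ge1$ is the maximum number of packets any server sends or receives in slot $t$. *)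

theory Defs
  imports Complex_Main
begin

text \<open>Servers are 0..<m. A coflow is a matrix D :: nat => nat => nat (sender, receiver),
  only entries with indices < m are relevant. Job j has coflows 0..<mu j, with
  matrices d j c. A packet of job j is a tuple (c, s, r, k) with k < d j c s r
  (the k-th unit packet of coflow c from sender s to receiver r).\<close>

definition eff_size :: "nat \<Rightarrow> (nat \<Rightarrow> nat \<Rightarrow> nat) \<Rightarrow> nat" where
  "eff_size m D = max (Max (insert 0 ((\<lambda>s. \<Sum>r<m. D s r) ` {..<m})))
                      (Max (insert 0 ((\<lambda>r. \<Sum>s<m. D s r) ` {..<m})))"

definition total_eff_size ::
  "nat \<Rightarrow> 'j set \<Rightarrow> ('j \<Rightarrow> nat) \<Rightarrow> ('j \<Rightarrow> nat \<Rightarrow> nat \<Rightarrow> nat \<Rightarrow> nat) \<Rightarrow> nat" where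
  "total_eff_size m N mu d = eff_size m (\<lambda>s r. \<Sum>j\<in>N. \<Sum>c<mu j. d j c s r)"

definition max_mu :: "'j set \<Rightarrow> ('j \<Rightarrow> nat) \<Rightarrow> nat" where
  "max_mu N mu = Max (insert 0 (mu ` N))"

definition coflow_packets :: "nat \<Rightarrow> (nat \<Rightarrow> nat \<Rightarrow> nat \<Rightarrow> nat) \<Rightarrow> nat \<Rightarrow> (nat \<times> nat \<times> nat \<times> nat) set" where
  "coflow_packets m dj c = {(c', s, r, k). c' = c \<and> s < m \<and> r < m \<and> k < dj c s r}"

definition job_packets :: "nat \<Rightarrow> nat \<Rightarrow> (nat \<Rightarrow> nat \<Rightarrow> nat \<Rightarrow> nat) \<Rightarrow> (nat \<times> nat \<times> nat \<times> nat) set" where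
  "job_packets m muj dj = (\<Union>c<muj. coflow_packets m dj c)"

definition feasible_on :: "(nat \<times> nat \<times> nat \<times> nat) set \<Rightarrow> (nat \<times> nat \<times> nat \<times> nat \<Rightarrow> nat) \<Rightarrow> bool" where
  "feasible_on A \<sigma> \<longleftrightarrow>
     (\<forall>p\<in>A. \<forall>q\<in>A. \<sigma> p = \<sigma> q \<longrightarrow> fst (snd p) = fst (snd q) \<longrightarrow> p = q) \<and>
     (\<forall>p\<in>A. \<forall>q\<in>A. \<sigma> p = \<sigma> q \<longrightarrow> fst (snd (snd p)) = fst (snd (snd q)) \<longrightarrow> p = q)"

text \<open>Step 1 of DMA for one job: the coflows are processed one after another in a
  topological order of the DAG Gj (pos c = position of coflow c in the order);
  coflow c occupies the eff_size consecutive slots starting after all coflows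
  earlier in the order, and its packets are scheduled feasibly there (as BNA does).\<close>
definition isolated_schedule ::
  "nat \<Rightarrow> nat \<Rightarrow> (nat \<Rightarrow> nat \<Rightarrow> nat \<Rightarrow> nat) \<Rightarrow> (nat \<times> nat) set
     \<Rightarrow> (nat \<times> nat \<times> nat \<times> nat \<Rightarrow> nat) \<Rightarrow> bool" where
  "isolated_schedule m muj dj Gj \<sigma> \<longleftrightarrow>
     (\<exists>pos. bij_betw pos {..<muj} {..<muj} \<and>
        (\<forall>(c1, c2)\<in>Gj. pos c1 < pos c2) \<and>
        (\<forall>c<muj.
           let start = (\<Sum>c'\<in>{c'. c' < muj \<and> pos c' < pos c}. eff_size m (dj c')) in
           (\<forall>p\<in>coflow_packets m dj c. start \<le> \<sigma> p \<and> \<sigma> p < start + eff_size m (dj c)) \<and>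
           feasible_on (coflow_packets m dj c) \<sigma>))"

text \<open>Length of the merged (Step 3) schedule: job j's isolated schedule sigma j
  delayed by delta j; the length is the number of slots up to the last used slot.\<close>
definition merged_length ::
  "nat \<Rightarrow> 'j set \<Rightarrow> ('j \<Rightarrow> nat) \<Rightarrow> ('j \<Rightarrow> nat \<Rightarrow> nat \<Rightarrow> nat \<Rightarrow> nat)
     \<Rightarrow> ('j \<Rightarrow> nat \<times> nat \<times> nat \<times> nat \<Rightarrow> nat) \<Rightarrow> ('j \<Rightarrow> nat) \<Rightarrow> nat" where
  "merged_length m N mu d \<sigma> \<delta> =
     Max (insert 0 {\<delta> j + \<sigma> j p + 1 | j p. j \<in> N \<and> p \<in> job_packets m (mu j) (d j)})"

end

theory Submission
  imports Defs
begin

lemma eff_mono: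
  assumes "\<And>s r. s < m \<Longrightarrow> r < m \<Longrightarrow> D s r \<le> E s r"
  shows "eff_size m D \<le> eff_size m E"
proof -
  have a: "Max (insert 0 ((\<lambda>s. \<Sum>r<m. D s r) ` {..<m})) \<le> Max (insert 0 ((\<lambda>s. \<Sum>r<m. E s r) ` {..<m}))"
  proof (subst Max_le_iff, simp, simp, intro ballI)
    fix x assume "x \<in> insert 0 ((\<lambda>s. \<Sum>r<m. D s r) ` {..<m})"
    then show "x \<le> Max (insert 0 ((\<lambda>s. \<Sum>r<m. E s r) ` {..<m}))"
    proof
      assume "x = 0" thus ?thesis by simp
    next
      assume "x \<in> (\<lambda>s. \<Sum>r<m. D s r) ` {..<m}"
      then obtain s where s: "s < m" "x = (\<Sum>r<m. D s r)" by auto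
      have "x \<le> (\<Sum>r<m. E s r)" using s assms by (auto intro: sum_mono)
      also have "\<dots> \<le> Max (insert 0 ((\<lambda>s. \<Sum>r<m. E s r) ` {..<m}))"
        using s by (intro Max_ge) auto
      finally show ?thesis .
    qed
  qed
  have b: "Max (insert 0 ((\<lambda>r. \<Sum>s<m. D s r) ` {..<m})) \<le> Max (insert 0 ((\<lambda>r. \<Sum>s<m. E s r) ` {..<m}))"
  proof (subst Max_le_iff, simp, simp, intro ballI)
    fix x assume "x \<in> insert 0 ((\<lambda>r. \<Sum>s<m. D s r) ` {..<m})"
    then show "x \<le> Max (insert 0 ((\<lambda>r. \<Sum>s<m. E s r) ` {..<m}))"
    proof
      assume "x = 0" thus ?thesis by simp
    next
      assume "x \<in> (\<lambda>r. \<Sum>s<m. D s r) ` {..<m}"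
      then obtain r where s: "r < m" "x = (\<Sum>s<m. D s r)" by auto
      have "x \<le> (\<Sum>s<m. E s r)" using s assms by (auto intro: sum_mono)
      also have "\<dots> \<le> Max (insert 0 ((\<lambda>r. \<Sum>s<m. E s r) ` {..<m}))"
        using s by (intro Max_ge) auto
      finally show ?thesis .
    qed
  qed
  show ?thesis unfolding eff_size_def by (rule max.mono[OF a b])
qed

lemma coflow_le_total:
  assumes "finite N" "j \<in> N" "c < mu j"
  shows "eff_size m (d j c) \<le> total_eff_size m N mu d"
  unfolding total_eff_size_def
proof (rule eff_mono)
  fix s r
  have "d j c s r \<le> (\<Sum>c<mu j. d j c s r)"
    using assms(3) by (intro member_le_sum) auto
  also have "\<dots> \<le> (\<Sum>j\<in>N. \<Sum>c<mu j. d j c s r)"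
    using assms(1,2) by (intro member_le_sum) auto
  finally show "d j c s r \<le> (\<Sum>j\<in>N. \<Sum>c<mu j. d j c s r)" .
qed

lemma packet_bound:
  assumes fin: "finite N" and jN: "j \<in> N"
    and iso: "isolated_schedule m (mu j) (d j) (G j) (\<sigma> j)"
    and p: "p \<in> job_packets m (mu j) (d j)"
  shows "\<sigma> j p + 1 \<le> max_mu N mu * total_eff_size m N mu d"
proof -
  from p obtain c where c: "c < mu j" "p \<in> coflow_packets m (d j) c"
    unfolding job_packets_def by auto
  obtain pos :: "nat \<Rightarrow> nat" where
    h: "\<forall>c<mu j. let start = (\<Sum>c'\<in>{c'. c' < mu j \<and> pos c' < pos c}. eff_size m (d j c')) in
           (\<forall>p\<in>coflow_packets m (d j) c. start \<le> \<sigma> j p \<and> \<sigma> j p < start + eff_size m (d j c)) \<and>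
           feasible_on (coflow_packets m (d j) c) (\<sigma> j)"
    using iso unfolding isolated_schedule_def
    apply (elim exE conjE) subgoal for pos by (rule that[of pos]) done
  define S where "S = {c'. c' < mu j \<and> pos c' < pos c}"
  have lt: "\<sigma> j p < (\<Sum>c'\<in>S. eff_size m (d j c')) + eff_size m (d j c)"
    using h c unfolding S_def Let_def by blast
  have "(\<Sum>c'\<in>S. eff_size m (d j c')) + eff_size m (d j c) = (\<Sum>c'\<in>insert c S. eff_size m (d j c'))"
    by (subst sum.insert) (auto simp: S_def)
  also have "\<dots> \<le> (\<Sum>c'<mu j. eff_size m (d j c'))"
    using c by (intro sum_mono2) (auto simp: S_def)
  also have "\<dots> \<le> (\<Sum>c'<mu j. total_eff_size m N mu d)"
    using coflow_le_total[OF fin jN] by (intro sum_mono) auto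
  also have "\<dots> = mu j * total_eff_size m N mu d" by simp
  also have "\<dots> \<le> max_mu N mu * total_eff_size m N mu d"
    unfolding max_mu_def using fin jN by (intro mult_right_mono Max_ge) auto
  finally show ?thesis using lt by linarith
qed

theorem lemma3:
  fixes m :: nat and N :: "'j set" and mu :: "'j \<Rightarrow> nat"
    and d :: "'j \<Rightarrow> nat \<Rightarrow> nat \<Rightarrow> nat \<Rightarrow> nat"
    and G :: "'j \<Rightarrow> (nat \<times> nat) set"
    and \<beta> :: real
    and \<sigma> :: "'j \<Rightarrow> nat \<times> nat \<times> nat \<times> nat \<Rightarrow> nat"
    and \<delta> :: "'j \<Rightarrow> nat"
  assumes "finite N"
    and "\<beta> > 1 / exp 1"
    and "\<And>j. j \<in> N \<Longrightarrow> G j \<subseteq> {..<mu j} \<times> {..<mu j} \<and> acyclic (G j)"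
    and "\<And>j. j \<in> N \<Longrightarrow> isolated_schedule m (mu j) (d j) (G j) (\<sigma> j)"
    and "\<And>j. j \<in> N \<Longrightarrow> real (\<delta> j) \<le> real (total_eff_size m N mu d) / \<beta>"
  shows "real (merged_length m N mu d \<sigma> \<delta>)
           \<le> (real (max_mu N mu) + 1 / \<beta>) * real (total_eff_size m N mu d)"
proof -
  define B where "B = (real (max_mu N mu) + 1 / \<beta>) * real (total_eff_size m N mu d)"
  define T where "T = {\<delta> j + \<sigma> j p + 1 | j p. j \<in> N \<and> p \<in> job_packets m (mu j) (d j)}"
  have "0 < 1 / exp (1::real)" by simp
  hence bp: "\<beta> > 0" using assms(2) by linarith
  have Bnn: "B \<ge> 0" unfolding B_def
    using bp by (intro mult_nonneg_nonneg) auto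
  have el: "real x \<le> B" if "x \<in> insert 0 T" for x
    using that
  proof
    assume "x = 0" thus ?thesis using Bnn by simp
  next
    assume "x \<in> T"
    then obtain j p where jp: "j \<in> N" "p \<in> job_packets m (mu j) (d j)" "x = \<delta> j + \<sigma> j p + 1"
      unfolding T_def by blast
    have "\<sigma> j p + 1 \<le> max_mu N mu * total_eff_size m N mu d"
      using packet_bound[of N j m mu d G \<sigma> p] assms(1,4) jp(1,2) by blast
    hence "real (\<sigma> j p + 1) \<le> real (max_mu N mu) * real (total_eff_size m N mu d)"
      by (metis of_nat_le_iff of_nat_mult)
    moreover have "real (\<delta> j) \<le> real (total_eff_size m N mu d) / \<beta>" using assms(5) jp(1) .
    ultimately show ?thesis unfolding B_def jp(3) by (simp add: algebra_simps)
  qed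
  have fin: "finite (insert 0 T)"
  proof (rule finite_subset)
    show "insert 0 T \<subseteq> {..nat \<lceil>B\<rceil>}"
    proof
      fix x assume "x \<in> insert 0 T"
      hence "real x \<le> B" by (rule el)
      hence "real x \<le> real (nat \<lceil>B\<rceil>)" by linarith
      thus "x \<in> {..nat \<lceil>B\<rceil>}" by simp
    qed
  qed simp
  obtain x where "x \<in> insert 0 T" "Max (insert 0 T) = x"
    using Max_in[OF fin] by blast
  hence "real (Max (insert 0 T)) \<le> B" using el by simp
  thus ?thesis unfolding B_def T_def merged_length_def .
qed

end
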